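(* Assume (A1) and (A4). Consider Algorithm 2 with parameter choice (P1), and any inner iteration $k$ of any stage $s$. Set $\mu^k=\nabla\hat F_{i_k}(x^k)+A^T\lambda^{k+1}$. Then $x^{k+1}=x^k-\eta_sG_k^{-1}\mu^k$, and $$-2\eta_s\langle\mu^k,x^k-x^*\rangle+\eta_s^2\|\mu^k\|_{G_k^{-1}}^2\le-2\eta_s\big(F(x^{k+1})-F(x^* )\big)-2\eta_s\langle\nabla\hat F_{i_k}(x^k)-\nabla F(x^k),x^{k+1}-x^*\rangle+2\eta_s\langle A^T\lambda^{k+1},x^*-x^{k+1}\rangle.$$
   Context: Standing setup. Let $n,m,p,q,r,l\ge1$. For $j\in\{1,\dots,m\}$ let $g_j:\mathbb R^q\to\mathbb R^r$ be continuously differentiable with Jacobian $\partial g_j(x)\in\mathbb R^{r\times q}$; for $i\in\{1,\dots,n\}$ let $f_i:\mathbb R^r\to\mathbb R$ be continuously differentiable. Set $g(x)=\frac1m\sum_{j=1}^m g_j(x)$, $F_i(x)=f_i(g(x))$, $F(x)=\frac1n\sum_{i=1}^nF_i(x)$. Let $R:\mathbb R^l\to\mathbb R$ be closed convex, $A\in\mathbb R^{p\times q}$, $B\in\mathbb R^{p\times l}$; the problem is $\min_{x,\omega}F(x)+R(\omega)$ s.t. $Ax+B\omega=0$, with optimal primal–dual solution $(x^*,\omega^*,\lambda^* )$. $\|\cdot\|$ is the Euclidean norm; for positive definite $H$, $\|x\|_H^2=x^THx$. Assumptions. (A1) Each $F_i$ is convex, $R$ is convex, an optimal primal–dual solution exists,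 and all $x$-points arising lie in a bounded set. (A4) There is $L_F>0$ with $\|(\partial g_j(x))^T\nabla f_i(g(x))-(\partial g_j(y))^T\nabla f_i(g(y))\|\le L_F\|x-y\|$ for all $i,j,x,y$. Algorithm 2 (inputs: integers $S,K\ge1$, $\rho>0$, stepsizes $\eta_s>0$, matrices $G_k$ per stage as below; initial $\tilde x^0=\hat x^0$, $\hat\omega^0$, $\hat\lambda^0$, $\hat G^0=I$). For $s=1,\dots,S$: set $\tilde x=\tilde x^{s-1}$, $x^0=\hat x^{s-1}$, $\omega^0=\hat\omega^{s-1}$, $\lambda^0=\hat\lambda^{s-1}$, $G_0=\hat G^{s-1}$; compute $g(\tilde x)$, $\nabla F(\tilde x)$. For $k=0,\dots,K-1$: (a) $\omega^{k+1}\in\arg\min_\omega R(\omega)+\langle\lambda^k,B\omega\rangle+\frac\rho2\|Ax^k+B\omega\|^2$; (b) compute $g(x^k)$ exactly; (c) draw $i_k$ uniform on $\{1,\dots,n\}$ and $j_k$ uniform on $\{1,\dots,m\}$, independently, and set $\nabla\hat F_{i_k}(x^k)=(\partial g_{j_k}(x^k))^T\nabla f_{i_k}(g(x^k))-(\partial g_{j_k}(\tilde x))^T\nabla f_{i_k}(g(\tilde x))+\nabla F(\tilde x)$; (d) $x^{k+1}=\arg\min_x\langle\nabla\hat F_{i_k}(x^k),x-x^k\rangle+\langle\lambda^k,Ax\rangle+\frac\rho2\|Ax+B\omega^{k+1}\|^2+\frac1{2\eta_s}\|x-x^k\|_{G_k}^2$; (e) $\lambda^{k+1}=\lambda^k+\rho(Ax^{k+1}+B\omega^{k+1})$.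 End of stage $s$: $\tilde x^s=\frac1K\sum_{k=1}^Kx^k$, $\tilde\omega^s=\frac1K\sum_{k=1}^K\omega^k$, $\hat x^s=x^K$, $\hat\omega^s=\omega^K$, $\hat\lambda^s=\lambda^K$, $\hat G^s=G_K$. Parameter choice (P1): $\eta_s=\frac1{(s+1)L_F}$, and in stage $s$ the matrices $G_0,\dots,G_K$ are scalar multiples of the identity with $\frac1sI=G_0\succeq G_1\succeq\dots\succeq G_{K-1}=G_K=\frac1{s+1}I$. *)

theory Defs
  imports "HOL-Analysis.Analysis"
begin

definition gavg :: "nat \<Rightarrow> (nat \<Rightarrow> real^'q \<Rightarrow> real^'r) \<Rightarrow> real^'q \<Rightarrow> real^'r" where
  "gavg m g x = (1 / real m) *\<^sub>R (\<Sum>j = 1..m. g j x)"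

definition Fobj :: "nat \<Rightarrow> nat \<Rightarrow> (nat \<Rightarrow> real^'r \<Rightarrow> real) \<Rightarrow> (nat \<Rightarrow> real^'q \<Rightarrow> real^'r)
    \<Rightarrow> real^'q \<Rightarrow> real" where
  "Fobj n m f g x = (1 / real n) * (\<Sum>i = 1..n. f i (gavg m g x))"

text \<open>Gradient of F by the chain rule:
  (1/n) sum_i (1/m) sum_j (dg_j(x))^T grad f_i(g(x)).\<close>
definition gradF :: "nat \<Rightarrow> nat \<Rightarrow> (nat \<Rightarrow> real^'r \<Rightarrow> real^'r) \<Rightarrow> (nat \<Rightarrow> real^'q \<Rightarrow> real^'r)
    \<Rightarrow> (nat \<Rightarrow> real^'q \<Rightarrow> real^'q^'r) \<Rightarrow> real^'q \<Rightarrow> real^'q" where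
  "gradF n m Df g Dg x = (1 / real n) *\<^sub>R (\<Sum>i = 1..n. (1 / real m) *\<^sub>R
      (\<Sum>j = 1..m. transpose (Dg j x) *v Df i (gavg m g x)))"

text \<open>Variance-reduced stochastic gradient of step (c), with sampled indices i, j,
  snapshot point xt and current point x.\<close>
definition gradest :: "nat \<Rightarrow> nat \<Rightarrow> (nat \<Rightarrow> real^'r \<Rightarrow> real^'r) \<Rightarrow> (nat \<Rightarrow> real^'q \<Rightarrow> real^'r)
    \<Rightarrow> (nat \<Rightarrow> real^'q \<Rightarrow> real^'q^'r) \<Rightarrow> nat \<Rightarrow> nat \<Rightarrow> real^'q \<Rightarrow> real^'q \<Rightarrow> real^'q" where
  "gradest n m Df g Dg i j xt x =
     transpose (Dg j x) *v Df i (gavg m g x) - transpose (Dg j xt) *v Df i (gavg m g xt)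
     + gradF n m Df g Dg xt"

definition wnorm2 :: "real^'q^'q \<Rightarrow> real^'q \<Rightarrow> real" where
  "wnorm2 H v = v \<bullet> (H *v v)"

text \<open>Lagrangian of  min F(x) + R(w)  s.t.  Ax + Bw = 0.\<close>
definition lagr :: "(real^'q \<Rightarrow> real) \<Rightarrow> (real^'l \<Rightarrow> real) \<Rightarrow> real^'q^'p \<Rightarrow> real^'l^'p
    \<Rightarrow> real^'q \<Rightarrow> real^'l \<Rightarrow> real^'p \<Rightarrow> real" where
  "lagr F R A B x w y = F x + R w + y \<bullet> (A *v x + B *v w)"

definition opt_pd :: "(real^'q \<Rightarrow> real) \<Rightarrow> (real^'l \<Rightarrow> real) \<Rightarrow> real^'q^'p \<Rightarrow> real^'l^'p
    \<Rightarrow> real^'q \<Rightarrow> real^'l \<Rightarrow> real^'p \<Rightarrow> bool" where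
  "opt_pd F R A B xs ws ys \<longleftrightarrow>
     (\<forall>y. lagr F R A B xs ws y \<le> lagr F R A B xs ws ys) \<and>
     (\<forall>x w. lagr F R A B xs ws ys \<le> lagr F R A B x w ys)"

end

theory Submission
  imports Defs
begin

lemma dot_lmul_matrix': "inner v ((y::real^_) v* A) = inner y (A *v v)"
  by (metis inner_commute dot_lmul_matrix)

lemma minv_scal:
  fixes c :: real assumes c: "c \<noteq> 0"
  shows "matrix_inv (c *\<^sub>R (mat 1 :: real^'n^'n)) = (1/c) *\<^sub>R mat 1"
proof -
  let ?M = "c *\<^sub>R (mat 1 :: real^'n^'n)"
  have ex: "?M ** ((1/c) *\<^sub>R mat 1) = mat 1 \<and> ((1/c) *\<^sub>R mat 1) ** ?M = mat 1"
    using c by (simp add: matrix_scalar_ac flip: scalar_matrix_assoc)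
  define A' where "A' = matrix_inv ?M"
  have "?M ** A' = mat 1 \<and> A' ** ?M = mat 1"
    unfolding A'_def matrix_inv_def by (rule someI, rule ex)
  hence h: "?M ** A' = mat 1" by simp
  have "A' = ((1/c) *\<^sub>R mat 1 ** ?M) ** A'" using ex by simp
  also have "\<dots> = (1/c) *\<^sub>R mat 1 ** (?M ** A')" by (simp add: matrix_mul_assoc)
  also have "\<dots> = (1/c) *\<^sub>R mat 1" using h by simp
  finally show ?thesis unfolding A'_def .
qed

lemma tangent:
  fixes h :: "'a::real_inner \<Rightarrow> real"
  assumes cv: "convex_on UNIV h" and d: "(h has_derivative (\<lambda>v. D \<bullet> v)) (at x)"
  shows "h z \<ge> h x + D \<bullet> (z - x)"
proof -
  define \<psi> where "\<psi> t = h (x + t *\<^sub>R (z - x))" for t :: real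
  have cvp: "convex_on UNIV \<psi>"
  proof (rule convex_onI)
    fix t u v :: real assume "0 < t" "t < 1"
    have e: "x + ((1 - t) *\<^sub>R u + t *\<^sub>R v) *\<^sub>R (z - x) = (1-t) *\<^sub>R (x + u *\<^sub>R (z - x)) + t *\<^sub>R (x + v *\<^sub>R (z - x))"
      by (simp add: algebra_simps)
    show "\<psi> ((1 - t) *\<^sub>R u + t *\<^sub>R v) \<le> (1 - t) * \<psi> u + t * \<psi> v"
      unfolding \<psi>_def e using convex_onD[OF cv, of t] \<open>0 < t\<close> \<open>t < 1\<close> by simp
  qed simp
  have dd: "((\<lambda>t. x + t *\<^sub>R (z - x)) has_derivative (\<lambda>t. t *\<^sub>R (z - x))) (at 0)"
    by (auto intro!: derivative_eq_intros)
  have "(\<psi> has_derivative (\<lambda>t. D \<bullet> (t *\<^sub>R (z - x)))) (at 0)"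
    unfolding \<psi>_def using has_derivative_compose[OF dd, of h "\<lambda>v. D \<bullet> v"] d by simp
  hence "(\<psi> has_field_derivative (D \<bullet> (z - x))) (at 0 within UNIV)"
    by (simp add: has_field_derivative_def mult.commute[of _ "D \<bullet> (z - x)"])
  from convex_on_imp_above_tangent[OF cvp connected_UNIV _ _ this, of 1]
  show ?thesis by (simp add: \<psi>_def)
qed

lemma descent:
  fixes h :: "'a::real_inner \<Rightarrow> real" and Dh :: "'a \<Rightarrow> 'a"
  assumes d: "\<And>y. (h has_derivative (\<lambda>v. Dh y \<bullet> v)) (at y)"
    and L: "\<And>y z. norm (Dh y - Dh z) \<le> L * norm (y - z)"
  shows "h y \<le> h x + Dh x \<bullet> (y - x) + L / 2 * (norm (y - x))\<^sup>2"
proof -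
  define dv where "dv = y - x"
  define \<phi> where "\<phi> t = h (x + t *\<^sub>R dv) - t * (Dh x \<bullet> dv) - L / 2 * t\<^sup>2 * (norm dv)\<^sup>2" for t :: real
  have "\<phi> 0 \<ge> \<phi> 1"
  proof (rule DERIV_nonpos_imp_nonincreasing[where f=\<phi>])
    fix t :: real assume t: "0 \<le> t" "t \<le> 1"
    have dd: "((\<lambda>t. x + t *\<^sub>R dv) has_derivative (\<lambda>t. t *\<^sub>R dv)) (at t)"
      by (auto intro!: derivative_eq_intros)
    have "((\<lambda>t. h (x + t *\<^sub>R dv)) has_derivative (\<lambda>s. Dh (x + t *\<^sub>R dv) \<bullet> (s *\<^sub>R dv))) (at t)"
      using has_derivative_compose[OF dd d] by simp
    hence h1: "((\<lambda>t. h (x + t *\<^sub>R dv)) has_real_derivative (Dh (x + t *\<^sub>R dv) \<bullet> dv)) (at t)"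
      by (simp add: has_field_derivative_def mult.commute[of _ "Dh (x + t *\<^sub>R dv) \<bullet> dv"])
    have "(\<phi> has_real_derivative (Dh (x + t *\<^sub>R dv) \<bullet> dv - (Dh x \<bullet> dv) - L / 2 * (2 * t) * (norm dv)\<^sup>2)) (at t)"
      unfolding \<phi>_def
      apply (rule DERIV_diff[OF DERIV_diff[OF h1]])
      apply (auto intro!: derivative_eq_intros)
      done
    moreover have "Dh (x + t *\<^sub>R dv) \<bullet> dv - (Dh x \<bullet> dv) - L / 2 * (2 * t) * (norm dv)\<^sup>2 \<le> 0"
    proof -
      have "Dh (x + t *\<^sub>R dv) \<bullet> dv - (Dh x \<bullet> dv) = (Dh (x + t *\<^sub>R dv) - Dh x) \<bullet> dv"
        by (simp add: inner_diff_left)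
      also have "\<dots> \<le> norm (Dh (x + t *\<^sub>R dv) - Dh x) * norm dv" by (rule norm_cauchy_schwarz)
      also have "\<dots> \<le> (L * (t * norm dv)) * norm dv"
        using L[of "x + t *\<^sub>R dv" x] t by (intro mult_right_mono) auto
      finally show ?thesis by (simp add: power2_eq_square algebra_simps)
    qed
    ultimately show "\<exists>y. (\<phi> has_real_derivative y) (at t) \<and> y \<le> 0" by blast
  qed simp
  thus ?thesis unfolding \<phi>_def dv_def by simp
qed

definition gi :: "nat \<Rightarrow> (nat \<Rightarrow> real^'r \<Rightarrow> real^'r) \<Rightarrow> (nat \<Rightarrow> real^'q \<Rightarrow> real^'r)
    \<Rightarrow> (nat \<Rightarrow> real^'q \<Rightarrow> real^'q^'r) \<Rightarrow> nat \<Rightarrow> real^'q \<Rightarrow> real^'q" where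
  "gi m Df g Dg i y = (1 / real m) *\<^sub>R (\<Sum>j = 1..m. transpose (Dg j y) *v Df i (gavg m g y))"

lemma gradF_gi: "gradF n m Df g Dg y = (1 / real n) *\<^sub>R (\<Sum>i = 1..n. gi m Df g Dg i y)"
  unfolding gradF_def gi_def ..

lemma deriv_i:
  fixes g :: "nat \<Rightarrow> real^'q \<Rightarrow> real^'r" and Dg :: "nat \<Rightarrow> real^'q \<Rightarrow> real^'q^'r"
  assumes g_deriv: "\<And>j y. j \<in> {1..m} \<Longrightarrow> (g j has_derivative (\<lambda>h. Dg j y *v h)) (at y)"
    and fd: "\<And>z. (f i has_derivative (\<lambda>h. Df i z \<bullet> h)) (at z)"
  shows "((\<lambda>y. f i (gavg m g y)) has_derivative (\<lambda>h. gi m Df g Dg i y \<bullet> h)) (at y)"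
proof -
  have gd: "(gavg m g has_derivative (\<lambda>h. (1 / real m) *\<^sub>R (\<Sum>j = 1..m. Dg j y *v h))) (at y)"
    unfolding gavg_def[abs_def]
    by (intro has_derivative_scaleR_right has_derivative_sum g_deriv) auto
  have "((\<lambda>y. f i (gavg m g y)) has_derivative (\<lambda>h. Df i (gavg m g y) \<bullet> ((1 / real m) *\<^sub>R (\<Sum>j = 1..m. Dg j y *v h)))) (at y)"
    using has_derivative_compose[OF gd fd] by simp
  moreover have "Df i (gavg m g y) \<bullet> ((1 / real m) *\<^sub>R (\<Sum>j = 1..m. Dg j y *v h)) = gi m Df g Dg i y \<bullet> h" for h
    unfolding gi_def
    by (simp add: inner_sum_left inner_sum_right dot_lmul_matrix)
  ultimately show ?thesis by simp
qed

lemma deriv_F: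
  fixes g :: "nat \<Rightarrow> real^'q \<Rightarrow> real^'r" and Dg :: "nat \<Rightarrow> real^'q \<Rightarrow> real^'q^'r"
  assumes g_deriv: "\<And>j y. j \<in> {1..m} \<Longrightarrow> (g j has_derivative (\<lambda>h. Dg j y *v h)) (at y)"
    and f_deriv: "\<And>i z. i \<in> {1..n} \<Longrightarrow> (f i has_derivative (\<lambda>h. Df i z \<bullet> h)) (at z)"
  shows "(Fobj n m f g has_derivative (\<lambda>h. gradF n m Df g Dg y \<bullet> h)) (at y)"
proof -
  have "((\<lambda>y. (1 / real n) * (\<Sum>i = 1..n. f i (gavg m g y))) has_derivative
     (\<lambda>h. (1 / real n) * (\<Sum>i = 1..n. gi m Df g Dg i y \<bullet> h))) (at y)"
    by (intro has_derivative_mult_right has_derivative_sum deriv_i g_deriv f_deriv) auto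
  moreover have "(1 / real n) * (\<Sum>i = 1..n. gi m Df g Dg i y \<bullet> h) = gradF n m Df g Dg y \<bullet> h" for h
    unfolding gradF_gi by (simp add: inner_sum_left)
  ultimately show ?thesis unfolding Fobj_def[abs_def] by simp
qed

lemma lip_gradF:
  fixes g :: "nat \<Rightarrow> real^'q \<Rightarrow> real^'r" and Dg :: "nat \<Rightarrow> real^'q \<Rightarrow> real^'q^'r"
  assumes n: "n \<ge> 1" and m: "m \<ge> 1"
    and A4: "\<And>i j y z. i \<in> {1..n} \<Longrightarrow> j \<in> {1..m} \<Longrightarrow>
        norm (transpose (Dg j y) *v Df i (gavg m g y) - transpose (Dg j z) *v Df i (gavg m g z))
          \<le> LF * norm (y - z)"
  shows "norm (gradF n m Df g Dg y - gradF n m Df g Dg z) \<le> LF * norm (y - z)"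
proof -
  have gi: "norm (gi m Df g Dg i y - gi m Df g Dg i z) \<le> LF * norm (y - z)" if i: "i \<in> {1..n}" for i
  proof -
    have "gi m Df g Dg i y - gi m Df g Dg i z = (1 / real m) *\<^sub>R (\<Sum>j = 1..m.
        transpose (Dg j y) *v Df i (gavg m g y) - transpose (Dg j z) *v Df i (gavg m g z))"
      unfolding gi_def by (simp add: sum_subtractf scaleR_diff_right)
    also have "norm \<dots> = (1 / real m) * norm (\<Sum>j = 1..m.
        transpose (Dg j y) *v Df i (gavg m g y) - transpose (Dg j z) *v Df i (gavg m g z))" by simp
    also have "\<dots> \<le> (1 / real m) * (\<Sum>j = 1..m. LF * norm (y - z))"
      by (intro mult_left_mono order.trans[OF norm_sum] sum_mono A4 i) auto
    also have "\<dots> = LF * norm (y - z)" using m by simp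
    finally show ?thesis .
  qed
  have "gradF n m Df g Dg y - gradF n m Df g Dg z = (1 / real n) *\<^sub>R (\<Sum>i = 1..n.
        gi m Df g Dg i y - gi m Df g Dg i z)"
    unfolding gradF_gi by (simp add: sum_subtractf scaleR_diff_right)
  also have "norm \<dots> = (1 / real n) * norm (\<Sum>i = 1..n. gi m Df g Dg i y - gi m Df g Dg i z)" by simp
  also have "\<dots> \<le> (1 / real n) * (\<Sum>i = 1..n. LF * norm (y - z))"
    by (intro mult_left_mono order.trans[OF norm_sum] sum_mono gi) auto
  also have "\<dots> = LF * norm (y - z)" using n by simp
  finally show ?thesis .
qed

lemma tangent_F:
  fixes g :: "nat \<Rightarrow> real^'q \<Rightarrow> real^'r" and Dg :: "nat \<Rightarrow> real^'q \<Rightarrow> real^'q^'r"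
  assumes g_deriv: "\<And>j y. j \<in> {1..m} \<Longrightarrow> (g j has_derivative (\<lambda>h. Dg j y *v h)) (at y)"
    and f_deriv: "\<And>i z. i \<in> {1..n} \<Longrightarrow> (f i has_derivative (\<lambda>h. Df i z \<bullet> h)) (at z)"
    and F_conv: "\<And>i. i \<in> {1..n} \<Longrightarrow> convex_on UNIV (\<lambda>y. f i (gavg m g y))"
  shows "Fobj n m f g z \<ge> Fobj n m f g x + gradF n m Df g Dg x \<bullet> (z - x)"
proof -
  have t: "f i (gavg m g z) \<ge> f i (gavg m g x) + gi m Df g Dg i x \<bullet> (z - x)" if i: "i \<in> {1..n}" for i
  proof (rule tangent[OF F_conv[OF i]])
    show "((\<lambda>y. f i (gavg m g y)) has_derivative (\<lambda>h. gi m Df g Dg i x \<bullet> h)) (at x)"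
      by (rule deriv_i) (use g_deriv f_deriv i in auto)
  qed
  have "(\<Sum>i = 1..n. f i (gavg m g x) + gi m Df g Dg i x \<bullet> (z - x)) \<le> (\<Sum>i = 1..n. f i (gavg m g z))"
    by (intro sum_mono t) auto
  hence "(1 / real n) * (\<Sum>i = 1..n. f i (gavg m g x) + gi m Df g Dg i x \<bullet> (z - x)) \<le> (1 / real n) * (\<Sum>i = 1..n. f i (gavg m g z))"
    by (intro mult_left_mono) auto
  thus ?thesis unfolding Fobj_def gradF_gi
    by (simp add: sum.distrib inner_sum_left distrib_left)
qed

theorem lemma7:
  fixes n m S K :: nat and \<rho> LF :: real
    and g :: "nat \<Rightarrow> real^'q \<Rightarrow> real^'r" and Dg :: "nat \<Rightarrow> real^'q \<Rightarrow> real^'q^'r"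
    and f :: "nat \<Rightarrow> real^'r \<Rightarrow> real" and Df :: "nat \<Rightarrow> real^'r \<Rightarrow> real^'r"
    and R :: "real^'l \<Rightarrow> real" and A :: "real^'q^'p" and B :: "real^'l^'p"
    and xs :: "real^'q" and ws :: "real^'l" and ys :: "real^'p"
    and \<eta> :: "nat \<Rightarrow> real" and gam :: "nat \<Rightarrow> nat \<Rightarrow> real" and G :: "nat \<Rightarrow> nat \<Rightarrow> real^'q^'q"
    and x :: "nat \<Rightarrow> nat \<Rightarrow> real^'q" and w :: "nat \<Rightarrow> nat \<Rightarrow> real^'l"
    and lam :: "nat \<Rightarrow> nat \<Rightarrow> real^'p" and xt :: "nat \<Rightarrow> real^'q"
    and ii jj :: "nat \<Rightarrow> nat \<Rightarrow> nat"
    and x0 :: "real^'q" and w0 :: "real^'l" and lam0 :: "real^'p"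
    and s k :: nat
  assumes n: "n \<ge> 1" and m: "m \<ge> 1" and SK: "S \<ge> 1" "K \<ge> 1" and rho: "\<rho> > 0"
    \<comment> \<open>smoothness of the data\<close>
    and g_deriv: "\<And>j y. j \<in> {1..m} \<Longrightarrow> (g j has_derivative (\<lambda>h. Dg j y *v h)) (at y)"
    and g_cont: "\<And>j. j \<in> {1..m} \<Longrightarrow> continuous_on UNIV (Dg j)"
    and f_deriv: "\<And>i z. i \<in> {1..n} \<Longrightarrow> (f i has_derivative (\<lambda>h. Df i z \<bullet> h)) (at z)"
    and f_cont: "\<And>i. i \<in> {1..n} \<Longrightarrow> continuous_on UNIV (Df i)"
    \<comment> \<open>(A1)\<close>
    and F_conv: "\<And>i. i \<in> {1..n} \<Longrightarrow> convex_on UNIV (\<lambda>y. f i (gavg m g y))"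
    and R_conv: "convex_on UNIV R"
    and opt: "opt_pd (Fobj n m f g) R A B xs ws ys"
    and bdd: "bounded ({x s' k' | s' k'. s' \<in> {1..S} \<and> k' \<le> K} \<union> xt ` {0..S})"
    \<comment> \<open>(A4)\<close>
    and LF: "LF > 0"
    and A4: "\<And>i j y z. i \<in> {1..n} \<Longrightarrow> j \<in> {1..m} \<Longrightarrow>
        norm (transpose (Dg j y) *v Df i (gavg m g y) - transpose (Dg j z) *v Df i (gavg m g z))
          \<le> LF * norm (y - z)"
    \<comment> \<open>parameter choice (P1)\<close>
    and eta: "\<And>s'. \<eta> s' = 1 / ((real s' + 1) * LF)"
    and Gscal: "\<And>s' k'. G s' k' = gam s' k' *\<^sub>R mat 1"
    and gam0: "\<And>s'. s' \<in> {1..S} \<Longrightarrow> gam s' 0 = 1 / real s'"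
    and gamK: "\<And>s'. s' \<in> {1..S} \<Longrightarrow> gam s' (K - 1) = 1 / (real s' + 1) \<and> gam s' K = 1 / (real s' + 1)"
    and gam_mono: "\<And>s' k1 k2. s' \<in> {1..S} \<Longrightarrow> k1 \<le> k2 \<Longrightarrow> k2 \<le> K \<Longrightarrow> gam s' k2 \<le> gam s' k1"
    \<comment> \<open>Algorithm 2: initialisation and passing between stages\<close>
    and init: "xt 0 = x0" "x 1 0 = x0" "w 1 0 = w0" "lam 1 0 = lam0" "G 1 0 = mat 1"
    and pass: "\<And>s'. 2 \<le> s' \<Longrightarrow> s' \<le> S \<Longrightarrow>
        x s' 0 = x (s' - 1) K \<and> w s' 0 = w (s' - 1) K \<and> lam s' 0 = lam (s' - 1) K
        \<and> G s' 0 = G (s' - 1) K"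
    and snap: "\<And>s'. s' \<in> {1..S} \<Longrightarrow> xt s' = (1 / real K) *\<^sub>R (\<Sum>k' = 1..K. x s' k')"
    \<comment> \<open>Algorithm 2: inner iterations (a)--(e)\<close>
    and step_a: "\<And>s' k' v. s' \<in> {1..S} \<Longrightarrow> k' < K \<Longrightarrow>
        R (w s' (Suc k')) + lam s' k' \<bullet> (B *v w s' (Suc k'))
          + \<rho> / 2 * (norm (A *v x s' k' + B *v w s' (Suc k')))\<^sup>2
        \<le> R v + lam s' k' \<bullet> (B *v v) + \<rho> / 2 * (norm (A *v x s' k' + B *v v))\<^sup>2"
    and step_c: "\<And>s' k'. s' \<in> {1..S} \<Longrightarrow> k' < K \<Longrightarrow> ii s' k' \<in> {1..n} \<and> jj s' k' \<in> {1..m}"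
    and step_d: "\<And>s' k' u. s' \<in> {1..S} \<Longrightarrow> k' < K \<Longrightarrow>
        gradest n m Df g Dg (ii s' k') (jj s' k') (xt (s' - 1)) (x s' k') \<bullet> (x s' (Suc k') - x s' k')
          + lam s' k' \<bullet> (A *v x s' (Suc k'))
          + \<rho> / 2 * (norm (A *v x s' (Suc k') + B *v w s' (Suc k')))\<^sup>2
          + 1 / (2 * \<eta> s') * wnorm2 (G s' k') (x s' (Suc k') - x s' k')
        \<le> gradest n m Df g Dg (ii s' k') (jj s' k') (xt (s' - 1)) (x s' k') \<bullet> (u - x s' k')
          + lam s' k' \<bullet> (A *v u)
          + \<rho> / 2 * (norm (A *v u + B *v w s' (Suc k')))\<^sup>2
          + 1 / (2 * \<eta> s') * wnorm2 (G s' k') (u - x s' k')"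
    and step_e: "\<And>s' k'. s' \<in> {1..S} \<Longrightarrow> k' < K \<Longrightarrow>
        lam s' (Suc k') = lam s' k' + \<rho> *\<^sub>R (A *v x s' (Suc k') + B *v w s' (Suc k'))"
    \<comment> \<open>the iteration under consideration\<close>
    and s: "s \<in> {1..S}" and k: "k < K"
  shows "let gh = gradest n m Df g Dg (ii s k) (jj s k) (xt (s - 1)) (x s k);
             \<mu> = gh + transpose A *v lam s (Suc k)
         in x s (Suc k) = x s k - \<eta> s *\<^sub>R (matrix_inv (G s k) *v \<mu>) \<and>
            - 2 * \<eta> s * (\<mu> \<bullet> (x s k - xs)) + (\<eta> s)\<^sup>2 * wnorm2 (matrix_inv (G s k)) \<mu>
            \<le> - 2 * \<eta> s * (Fobj n m f g (x s (Suc k)) - Fobj n m f g xs)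
              - 2 * \<eta> s * ((gh - gradF n m Df g Dg (x s k)) \<bullet> (x s (Suc k) - xs))
              + 2 * \<eta> s * ((transpose A *v lam s (Suc k)) \<bullet> (xs - x s (Suc k)))"
proof -
  define \<gamma> where "\<gamma> = gam s k"
  define e where "e = \<eta> s"
  define x0' where "x0' = x s k"
  define x1 where "x1 = x s (Suc k)"
  define w1 where "w1 = w s (Suc k)"
  define l0 where "l0 = lam s k"
  define l1 where "l1 = lam s (Suc k)"
  define gh where "gh = gradest n m Df g Dg (ii s k) (jj s k) (xt (s - 1)) (x s k)"
  define \<mu> where "\<mu> = gh + transpose A *v l1"
  define F where "F = Fobj n m f g"
  define DF where "DF = gradF n m Df g Dg"
  have s1: "real s \<ge> 1" using s by auto
  have "gam s K \<le> \<gamma>" unfolding \<gamma>_def using gam_mono[OF s, of k K] k by simp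
  hence g_lb: "\<gamma> \<ge> 1 / (real s + 1)" using gamK[OF s] by simp
  have gpos: "\<gamma> > 0" using g_lb s1 by (smt (verit) divide_pos_pos)
  have epos: "e > 0" unfolding e_def eta using LF s1 by simp
  have eLF: "e * LF = 1 / (real s + 1)" unfolding e_def eta using LF by simp
  have Gk: "G s k = \<gamma> *\<^sub>R mat 1" unfolding \<gamma>_def by (rule Gscal)
  have Gv: "G s k *v v = \<gamma> *\<^sub>R v" for v
    unfolding Gk by (simp flip: scaleR_matrix_vector_assoc)
  have wn: "wnorm2 (G s k) v = \<gamma> * (v \<bullet> v)" for v
    unfolding wnorm2_def Gv by simp
  have tr: "(transpose A *v y) \<bullet> v = y \<bullet> (A *v v)" for y v
    by (simp add: dot_lmul_matrix)
  \<comment> \<open>first-order optimality of step (d)\<close>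
  define c where "c = gh + transpose A *v l0 + \<rho> *\<^sub>R (transpose A *v (A *v x1 + B *v w1)) + (\<gamma> / e) *\<^sub>R (x1 - x0')"
  define Q where "Q v = \<rho> / 2 * ((A *v v) \<bullet> (A *v v)) + \<gamma> / (2 * e) * (v \<bullet> v)" for v
  have Qnn: "Q v \<ge> 0" for v unfolding Q_def using rho gpos epos
    by (intro add_nonneg_nonneg mult_nonneg_nonneg) auto
  have Qsc: "Q (t *\<^sub>R v) = t\<^sup>2 * Q v" for t v
    unfolding Q_def by (simp add: matrix_vector_mult_scaleR power2_eq_square algebra_simps)
  have opt1: "0 \<le> c \<bullet> v + Q v" for v
  proof -
    have sd: "gh \<bullet> (x1 - x0') + l0 \<bullet> (A *v x1) + \<rho> / 2 * (norm (A *v x1 + B *v w1))\<^sup>2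
          + 1 / (2 * e) * wnorm2 (G s k) (x1 - x0')
        \<le> gh \<bullet> ((x1 + v) - x0') + l0 \<bullet> (A *v (x1 + v)) + \<rho> / 2 * (norm (A *v (x1 + v) + B *v w1))\<^sup>2
          + 1 / (2 * e) * wnorm2 (G s k) ((x1 + v) - x0')"
      using step_d[OF s k, of "x1 + v"] unfolding gh_def x1_def x0'_def l0_def w1_def e_def by simp
    have "gh \<bullet> ((x1 + v) - x0') + l0 \<bullet> (A *v (x1 + v)) + \<rho> / 2 * (norm (A *v (x1 + v) + B *v w1))\<^sup>2
          + 1 / (2 * e) * wnorm2 (G s k) ((x1 + v) - x0')
        = (gh \<bullet> (x1 - x0') + l0 \<bullet> (A *v x1) + \<rho> / 2 * (norm (A *v x1 + B *v w1))\<^sup>2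
          + 1 / (2 * e) * wnorm2 (G s k) (x1 - x0')) + (c \<bullet> v + Q v)"
      unfolding wn c_def Q_def power2_norm_eq_inner
      by (simp add: tr dot_lmul_matrix dot_lmul_matrix' inner_commute inner_add_left inner_add_right inner_diff_left inner_diff_right
          matrix_vector_right_distrib algebra_simps add_divide_distrib diff_divide_distrib)
    thus ?thesis using sd by linarith
  qed
  have c0: "c = 0"
  proof (rule ccontr)
    assume "c \<noteq> 0"
    hence cc: "c \<bullet> c > 0" by simp
    define t where "t = (c \<bullet> c) / (2 * Q c + 1)"
    have tpos: "t > 0" unfolding t_def using cc Qnn[of c] by simp
    have "0 \<le> c \<bullet> (- t *\<^sub>R c) + Q (- t *\<^sub>R c)" by (rule opt1)
    hence "0 \<le> - t * (c \<bullet> c) + t\<^sup>2 * Q c" using Qsc[of "- t" c] by simp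
    hence "0 \<le> t * (t * Q c - c \<bullet> c)" by (simp add: power2_eq_square algebra_simps)
    hence "c \<bullet> c \<le> t * Q c" using tpos by (simp add: zero_le_mult_iff)
    moreover have "t * Q c < c \<bullet> c"
    proof -
      have "t * Q c = (c \<bullet> c) * (Q c / (2 * Q c + 1))" unfolding t_def by simp
      also have "\<dots> < (c \<bullet> c) * 1"
        using cc Qnn[of c] by (intro mult_strict_left_mono) auto
      finally show ?thesis by simp
    qed
    ultimately show False by simp
  qed
  have l1e: "l1 = l0 + \<rho> *\<^sub>R (A *v x1 + B *v w1)"
    unfolding l1_def l0_def x1_def w1_def using step_e[OF s k] .
  have muc: "\<mu> = gh + transpose A *v l0 + \<rho> *\<^sub>R (transpose A *v (A *v x1 + B *v w1))"
    unfolding \<mu>_def l1e by (simp add: matrix_vector_right_distrib matrix_vector_mult_scaleR)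
  have mu_d: "\<mu> = (\<gamma> / e) *\<^sub>R (x0' - x1)"
    using c0 unfolding c_def muc[symmetric]
    by (simp add: algebra_simps)
  have x1e: "x1 = x0' - e *\<^sub>R ((1 / \<gamma>) *\<^sub>R \<mu>)"
    using gpos epos unfolding mu_d by simp
  have Minv: "matrix_inv (G s k) = (1 / \<gamma>) *\<^sub>R mat 1"
    unfolding Gk using gpos by (simp add: minv_scal)
  have Mv: "matrix_inv (G s k) *v v = (1 / \<gamma>) *\<^sub>R v" for v
    unfolding Minv by (simp flip: scaleR_matrix_vector_assoc)
  have desc: "F x1 \<le> F x0' + DF x0' \<bullet> (x1 - x0') + LF / 2 * (norm (x1 - x0'))\<^sup>2"
    unfolding F_def DF_def
    by (rule descent[where Dh = "gradF n m Df g Dg"], rule deriv_F[OF g_deriv f_deriv], auto intro: lip_gradF[OF n m A4])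
  have tang: "F xs \<ge> F x0' + DF x0' \<bullet> (xs - x0')"
    unfolding F_def DF_def by (rule tangent_F[OF g_deriv f_deriv F_conv]) auto
  define d where "d = x0' - x1"
  define p where "p = d \<bullet> d"
  define q where "q = d \<bullet> (x1 - xs)"
  define r where "r = (transpose A *v l1) \<bullet> (x1 - xs)"
  define ee where "ee = DF x0' \<bullet> (x1 - xs)"
  have Fb: "F x1 \<le> F xs + ee + LF / 2 * p"
  proof -
    have "DF x0' \<bullet> (x1 - x0') - DF x0' \<bullet> (xs - x0') = ee"
      unfolding ee_def by (simp add: inner_diff_right)
    moreover have "(norm (x1 - x0'))\<^sup>2 = p" unfolding p_def d_def power2_norm_eq_inner
      by (simp add: inner_commute inner_diff_left inner_diff_right)
    moreover note desc tang
    ultimately show ?thesis by (smt (verit))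
  qed
  have pnn: "p \<ge> 0" unfolding p_def by simp
  have LHS: "- 2 * e * (\<mu> \<bullet> (x0' - xs)) + e\<^sup>2 * wnorm2 (matrix_inv (G s k)) \<mu> = - \<gamma> * p - 2 * \<gamma> * q"
  proof -
    have "x0' - xs = d + (x1 - xs)" unfolding d_def by simp
    hence "d \<bullet> (x0' - xs) = p + q" unfolding p_def q_def by (simp only: inner_add_right)
    hence a: "\<mu> \<bullet> (x0' - xs) = (\<gamma> / e) * (p + q)" unfolding mu_d d_def[symmetric] by simp
    have b: "wnorm2 (matrix_inv (G s k)) \<mu> = (\<gamma> / e)\<^sup>2 * p / \<gamma>"
      unfolding wnorm2_def Mv mu_d p_def d_def by (simp add: power2_eq_square)
    show ?thesis unfolding a b using gpos epos by (simp add: power2_eq_square field_simps)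
  qed
  have RHS: "- 2 * e * (F x1 - F xs) - 2 * e * ((gh - DF x0') \<bullet> (x1 - xs))
              + 2 * e * ((transpose A *v l1) \<bullet> (xs - x1))
           = - 2 * e * (F x1 - F xs) - 2 * \<gamma> * q + 2 * e * ee"
  proof -
    have ghe: "gh = \<mu> - transpose A *v l1" unfolding \<mu>_def by simp
    have "(gh - DF x0') \<bullet> (x1 - xs) = (\<gamma> / e) * q - r - ee"
      unfolding ghe mu_d q_def r_def ee_def d_def by (simp add: inner_diff_left)
    moreover have "(transpose A *v l1) \<bullet> (xs - x1) = - r" unfolding r_def
      by (simp add: inner_diff_right)
    ultimately show ?thesis using epos by (simp add: field_simps)
  qed
  have key: "- \<gamma> * p - 2 * \<gamma> * q \<le> - 2 * e * (F x1 - F xs) - 2 * \<gamma> * q + 2 * e * ee"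
  proof -
    have "2 * e * (F x1 - F xs - ee) \<le> 2 * e * (LF / 2 * p)"
      using Fb epos by (intro mult_left_mono) auto
    also have "\<dots> = (e * LF) * p" by simp
    also have "\<dots> \<le> \<gamma> * p" unfolding eLF using g_lb pnn by (intro mult_right_mono) auto
    finally show ?thesis by (simp add: algebra_simps)
  qed
  show ?thesis
    unfolding Let_def
    apply (fold gh_def)
    apply (fold \<gamma>_def e_def x0'_def x1_def l1_def)
    apply (fold \<mu>_def F_def DF_def)
    apply (intro conjI)
    subgoal using x1e Mv by simp
    subgoal using LHS RHS key by linarith
    done
qed

end
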